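(* (i) For positive real numbers $a\ne b$, \[ \left[\frac{\Gamma(b)}{\Gamma(a)}\right]^{1/(b-a)}<\sqrt{ab}\,\left(\frac{a}{b}\right)^{1/(2(b-a))} \] holds if $0<|b-a|<1$, and the reverse strict inequality holds if $|b-a|>1$. (ii) Let $c\ne 0$ be real, and let $\beta,\gamma$ be real parameters. Consider the double inequality \[ \frac{(k-1)!}{2}\left[\left(\frac{1}{b-a}+\beta\right)\frac{1}{a^k}+\left(\beta-\frac{1}{b-a}\right)\frac{1}{b^k}\right] <\frac{(-1)^{k-1}\left[\psi^{(k-1)}(b)-\psi^{(k-1)}(a)\right]}{b-a} <\frac{(k-1)!}{2}\left[\left(\frac{1}{b-a}+\gamma\right)\frac{1}{a^k}+\left(\gamma-\frac{1}{b-a}\right)\frac{1}{b^k}\right]. \] If $0<|c|<1$, this double inequality holds for all $k\in\mathbb{N}$ and all positive $a,b$ with $b-a=c$ if and only if $\beta\le 1$ and $\gamma\ge\frac{1}{|c|}$. If $|c|>1$, it holds for all $k\in\mathbb{N}$ and all positive $a,b$ with $b-a=c$ if and only if $\beta\le\frac{1}{|c|}$ and $\gamma\ge 1$.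
   Context: $\Gamma$ is Euler's gamma function, $\psi=\Gamma'/\Gamma$ is the digamma function, $\psi^{(0)}=\psi$ and $\psi^{(m)}$ denotes its $m$-th derivative; $\mathbb{N}=\{1,2,\dots\}$. Here $\gamma$ denotes a real parameter, not Euler's constant. *)

theory Defs
  imports "HOL-Analysis.Analysis"
begin

end

theory Submission imports Defs begin


lemma core:
  fixes P P1 P2 :: "real \<Rightarrow> real" and z m s :: real
  assumes d1: "\<And>x. x > 0 \<Longrightarrow> (P has_real_derivative P1 x) (at x)"
      and d2: "\<And>x. x > 0 \<Longrightarrow> (P1 has_real_derivative P2 x) (at x)"
      and mono: "\<And>x y. 0 < x \<Longrightarrow> x < y \<Longrightarrow> P2 x < P2 y"
      and zm: "0 < z - m" and s: "0 < s" "s < m"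
  shows "m*(P(z+s)-P(z-s)) < s*(P(z+m)-P(z-m)) \<and>
         s*(P(z+m)-P(z-m)) - m*(P(z+s)-P(z-s)) \<le> s*(m-s)*(P1(z+m)+P1(z-m)-2*P1 z)"
proof -
  define U where "U t = P(z+t) - P(z-t)" for t
  define U' where "U' t = P1(z+t) + P1(z-t)" for t
  have dU: "(U has_real_derivative U' t) (at t)" if "0 \<le> t" "t \<le> m" for t
  proof -
    have a: "((\<lambda>t. P(z+t)) has_real_derivative P1(z+t) * 1) (at t)"
      by (rule DERIV_chain2[OF d1]) (use that zm in \<open>auto intro!: derivative_eq_intros\<close>)
    have b: "((\<lambda>t. P(z-t)) has_real_derivative P1(z-t) * (-1)) (at t)"
      by (rule DERIV_chain2[OF d1]) (use that zm in \<open>auto intro!: derivative_eq_intros\<close>)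
    show ?thesis using DERIV_diff[OF a b] unfolding U_def[abs_def] U'_def by simp
  qed
  have monoU: "U' t1 < U' t2" if "0 \<le> t1" "t1 < t2" "t2 \<le> m" for t1 t2
  proof -
    have h1: "\<And>x. z+t1 \<le> x \<Longrightarrow> x \<le> z+t2 \<Longrightarrow> (P1 has_real_derivative P2 x) (at x)"
      using that zm d2 by auto
    have h2: "\<And>x. z-t2 \<le> x \<Longrightarrow> x \<le> z-t1 \<Longrightarrow> (P1 has_real_derivative P2 x) (at x)"
      using that zm d2 by auto
    have lt1: "z+t1 < z+t2" "z-t2 < z-t1" using that by auto
    obtain e1 where e1: "z+t1 < e1" "e1 < z+t2" "P1 (z+t2) - P1 (z+t1) = ((z+t2)-(z+t1)) * P2 e1"
      using MVT2[OF lt1(1) h1] by blast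
    obtain e2 where e2: "z-t2 < e2" "e2 < z-t1" "P1 (z-t1) - P1 (z-t2) = ((z-t1)-(z-t2)) * P2 e2"
      using MVT2[OF lt1(2) h2] by blast
    have "P2 e2 < P2 e1" using mono[of e2 e1] e1 e2 that zm by auto
    hence "(t2-t1) * P2 e2 < (t2-t1) * P2 e1" using that by simp
    thus ?thesis using e1(3) e2(3) unfolding U'_def by (simp add: algebra_simps)
  qed
  have dU1: "\<And>t. 0 \<le> t \<Longrightarrow> t \<le> s \<Longrightarrow> (U has_real_derivative U' t) (at t)"
    using dU s by simp
  have dU2: "\<And>t. s \<le> t \<Longrightarrow> t \<le> m \<Longrightarrow> (U has_real_derivative U' t) (at t)"
    using dU s by simp
  obtain x1 where x1: "0 < x1" "x1 < s" "U s - U 0 = (s - 0) * U' x1"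
    using MVT2[OF s(1) dU1] by blast
  obtain x2 where x2: "s < x2" "x2 < m" "U m - U s = (m - s) * U' x2"
    using MVT2[OF s(2) dU2] by blast
  have U0: "U 0 = 0" by (simp add: U_def)
  have key: "s * U m - m * U s = s*(m-s)*(U' x2 - U' x1)"
  proof -
    have Us: "U s = s * U' x1" using x1(3) U0 by simp
    have Um: "U m = s * U' x1 + (m-s) * U' x2" using x2(3) Us by (simp add: algebra_simps)
    show ?thesis unfolding Um Us by (simp add: algebra_simps)
  qed
  have lt: "U' x1 < U' x2" using monoU[of x1 x2] x1 x2 by auto
  have le1: "U' x2 \<le> U' m" using monoU[of x2 m] x1 x2 by auto
  have le2: "U' 0 \<le> U' x1" using monoU[of 0 x1] x1 x2 by auto
  have pos: "0 < s*(m-s)" using s by simp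
  have "0 < s*(m-s)*(U' x2 - U' x1)" using lt pos by (simp add: mult_pos_pos)
  hence A: "m * U s < s * U m" using key by linarith
  have B: "s * U m - m * U s \<le> s*(m-s)*(U' m - U' 0)"
    unfolding key using le1 le2 pos by (intro mult_left_mono) auto
  show ?thesis using A B unfolding U_def U'_def by (simp add: algebra_simps)
qed

definition LL :: "(real \<Rightarrow> real) \<Rightarrow> real \<Rightarrow> real \<Rightarrow> real" where
  "LL P a c = 2*(P(a+c)-P a) - (1+c)*(P(a+1)-P a) + (1-c)*(P(a+c+1)-P(a+c))"

lemma L_small:
  fixes P P1 P2 :: "real \<Rightarrow> real"
  assumes d1: "\<And>x. x > 0 \<Longrightarrow> (P has_real_derivative P1 x) (at x)"
      and d2: "\<And>x. x > 0 \<Longrightarrow> (P1 has_real_derivative P2 x) (at x)"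
      and mono: "\<And>x y. 0 < x \<Longrightarrow> x < y \<Longrightarrow> P2 x < P2 y"
      and a: "0 < a" and c: "0 < c" "c < 1"
  shows "0 < LL P a c \<and> LL P a c \<le> c*(1-c)*(P1(a+1+c)+P1 a-2*P1(a+(1+c)/2))"
proof -
  have h: "(1+c)/2*(P(a+(1+c)/2+(1-c)/2)-P(a+(1+c)/2-(1-c)/2)) < (1-c)/2*(P(a+(1+c)/2+(1+c)/2)-P(a+(1+c)/2-(1+c)/2)) \<and>
         (1-c)/2*(P(a+(1+c)/2+(1+c)/2)-P(a+(1+c)/2-(1+c)/2)) - (1+c)/2*(P(a+(1+c)/2+(1-c)/2)-P(a+(1+c)/2-(1-c)/2)) \<le> (1-c)/2*((1+c)/2-(1-c)/2)*(P1(a+(1+c)/2+(1+c)/2)+P1(a+(1+c)/2-(1+c)/2)-2*P1 (a+(1+c)/2))"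
    by (rule core[OF d1 d2 mono]) (use a c in auto)
  have e1: "a+(1+c)/2+(1-c)/2 = a+1" "a+(1+c)/2-(1-c)/2 = a+c" "a+(1+c)/2+(1+c)/2 = a+1+c"
     "a+(1+c)/2-(1+c)/2 = a" "(1+c)/2-(1-c)/2 = c" by (simp_all add: field_simps)
  have e2: "a+c+1 = a+1+c" by simp
  have eq: "LL P a c = 2*((1-c)/2*(P(a+1+c)-P a) - (1+c)/2*(P(a+1)-P(a+c)))"
    unfolding LL_def e2 by (simp add: field_simps)
  have eq2: "c*(1-c)*(P1(a+1+c)+P1 a-2*P1(a+(1+c)/2)) = 2*((1-c)/2*c*(P1(a+1+c)+P1 a-2*P1(a+(1+c)/2)))"
    by (simp add: field_simps)
  have gen: "\<And>A B C::real. B < A \<and> A - B \<le> C \<Longrightarrow> 0 < 2*(A-B) \<and> 2*(A-B) \<le> 2*C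
      \<and> -2*(A-B) < 0 \<and> -(-2*(A-B)) \<le> 2*C" by auto
  show ?thesis using gen[OF h[unfolded e1]] unfolding eq eq2 by blast
qed

lemma L_big:
  fixes P P1 P2 :: "real \<Rightarrow> real"
  assumes d1: "\<And>x. x > 0 \<Longrightarrow> (P has_real_derivative P1 x) (at x)"
      and d2: "\<And>x. x > 0 \<Longrightarrow> (P1 has_real_derivative P2 x) (at x)"
      and mono: "\<And>x y. 0 < x \<Longrightarrow> x < y \<Longrightarrow> P2 x < P2 y"
      and a: "0 < a" and c: "1 < c"
  shows "LL P a c < 0 \<and> - LL P a c \<le> (c-1)*(P1(a+1+c)+P1 a-2*P1(a+(1+c)/2))"
proof -
  have h: "(1+c)/2*(P(a+(1+c)/2+(c-1)/2)-P(a+(1+c)/2-(c-1)/2)) < (c-1)/2*(P(a+(1+c)/2+(1+c)/2)-P(a+(1+c)/2-(1+c)/2)) \<and>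
         (c-1)/2*(P(a+(1+c)/2+(1+c)/2)-P(a+(1+c)/2-(1+c)/2)) - (1+c)/2*(P(a+(1+c)/2+(c-1)/2)-P(a+(1+c)/2-(c-1)/2)) \<le> (c-1)/2*((1+c)/2-(c-1)/2)*(P1(a+(1+c)/2+(1+c)/2)+P1(a+(1+c)/2-(1+c)/2)-2*P1 (a+(1+c)/2))"
    by (rule core[OF d1 d2 mono]) (use a c in auto)
  have e1: "a+(1+c)/2+(c-1)/2 = a+c" "a+(1+c)/2-(c-1)/2 = a+1" "a+(1+c)/2+(1+c)/2 = a+1+c"
     "a+(1+c)/2-(1+c)/2 = a" "(1+c)/2-(c-1)/2 = 1" by (simp_all add: field_simps)
  have e2: "a+c+1 = a+1+c" by simp
  have eq: "LL P a c = -2*((c-1)/2*(P(a+1+c)-P a) - (1+c)/2*(P(a+c)-P(a+1)))"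
    unfolding LL_def e2 by (simp add: field_simps)
  have eq2: "(c-1)*(P1(a+1+c)+P1 a-2*P1(a+(1+c)/2)) = 2*((c-1)/2*1*(P1(a+1+c)+P1 a-2*P1(a+(1+c)/2)))"
    by (simp add: field_simps)
  have gen: "\<And>A B C::real. B < A \<and> A - B \<le> C \<Longrightarrow> 0 < 2*(A-B) \<and> 2*(A-B) \<le> 2*C
      \<and> -2*(A-B) < 0 \<and> -(-2*(A-B)) \<le> 2*C" by auto
  show ?thesis using gen[OF h[unfolded e1]] unfolding eq eq2 by blast
qed



definition PP :: "nat \<Rightarrow> real \<Rightarrow> real" where
  "PP n x = (-1)^n * Polygamma n x / fact n"

lemma pos_notnp: "(x::real) > 0 \<Longrightarrow> x \<notin> \<int>\<^sub>\<le>\<^sub>0"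
  by (auto elim!: nonpos_Ints_cases)

lemma PP_deriv:
  assumes "x > 0"
  shows "((\<lambda>x. (-1)^n * Polygamma j x / fact n) has_real_derivative ((-1)^n * Polygamma (Suc j) x / fact n)) (at x)"
proof -
  have "(Polygamma j has_real_derivative Polygamma (Suc j) x) (at x)"
    by (rule has_field_derivative_Polygamma) (use assms pos_notnp in auto)
  from DERIV_cdivide[OF DERIV_cmult[OF this, of "(-1)^n"], of "fact n"] show ?thesis by simp
qed

lemma PP2_mono:
  fixes x y :: real
  assumes "0 < x" "x < y"
  shows "(-1)^n * Polygamma (Suc (Suc n)) x / fact n < (-1)^n * Polygamma (Suc (Suc n)) y / fact n"
proof (cases "even n")
  case True
  have "Polygamma (Suc (Suc n)) x < Polygamma (Suc (Suc n)) y"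
    by (rule Polygamma_real_strict_mono) (use assms True in auto)
  thus ?thesis using True by (simp add: divide_strict_right_mono)
next
  case False
  have "Polygamma (Suc (Suc n)) x > Polygamma (Suc (Suc n)) y"
    by (rule Polygamma_real_strict_antimono) (use assms False in auto)
  thus ?thesis using False by (simp add: divide_strict_right_mono)
qed

lemma PP_mono:
  assumes "0 < x" "x < y"
  shows "PP n x < PP n y"
proof (cases "even n")
  case True
  have "Polygamma n x < Polygamma n y"
    by (rule Polygamma_real_strict_mono) (use assms True in auto)
  thus ?thesis using True by (simp add: PP_def divide_strict_right_mono)
next
  case False
  have "Polygamma n x > Polygamma n y"
    by (rule Polygamma_real_strict_antimono) (use assms False in auto)
  thus ?thesis using False by (simp add: PP_def divide_strict_right_mono)
qed

lemma PP_step: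
  assumes "x > 0"
  shows "PP n (x+1) - PP n x = 1 / x ^ Suc n"
proof -
  have "Polygamma n (x + 1) = Polygamma n x + (-1)^n * fact n / (x ^ Suc n)"
    by (rule Polygamma_plus1) (use assms in auto)
  hence "PP n (x+1) - PP n x = (-1)^n * ((-1)^n * fact n / (x ^ Suc n)) / fact n"
    unfolding PP_def by (simp add: field_simps)
  also have "\<dots> = ((-1)^n * (-1)^n) * (fact n / fact n) / x ^ Suc n" by (simp add: field_simps)
  also have "\<dots> = 1 / x ^ Suc n" by (simp flip: power_add)
  finally show ?thesis .
qed

lemma LL_PP_small:
  assumes "0 < a" "0 < c" "c < 1"
  shows "0 < LL (PP n) a c \<and> LL (PP n) a c \<le> c*(1-c)*((-1)^n * Polygamma (Suc n) (a+1+c) / fact n + (-1)^n * Polygamma (Suc n) a / fact n - 2*((-1)^n * Polygamma (Suc n) (a+(1+c)/2) / fact n))"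
  by (rule L_small[of "PP n" "\<lambda>x. (-1)^n * Polygamma (Suc n) x / fact n" "\<lambda>x. (-1)^n * Polygamma (Suc (Suc n)) x / fact n"])
     (auto simp: PP_def[abs_def] intro: PP_deriv PP2_mono assms)

lemma LL_PP_big:
  assumes "0 < a" "1 < c"
  shows "LL (PP n) a c < 0 \<and> - LL (PP n) a c \<le> (c-1)*((-1)^n * Polygamma (Suc n) (a+1+c) / fact n + (-1)^n * Polygamma (Suc n) a / fact n - 2*((-1)^n * Polygamma (Suc n) (a+(1+c)/2) / fact n))"
  by (rule L_big[of "PP n" "\<lambda>x. (-1)^n * Polygamma (Suc n) x / fact n" "\<lambda>x. (-1)^n * Polygamma (Suc (Suc n)) x / fact n"])
     (auto simp: PP_def[abs_def] intro: PP_deriv PP2_mono assms)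

lemma tri1_tel:
  assumes "a > 0"
  shows "Polygamma 1 a - Polygamma 1 (a + real N) \<le> real N / a^2"
proof (induction N)
  case 0 then show ?case by simp
next
  case (Suc N)
  have "Polygamma 1 (a + real N + 1) = Polygamma 1 (a + real N) + (-1)^1 * fact 1 / (a + real N) ^ Suc 1"
    by (rule Polygamma_plus1) (use assms in auto)
  hence e: "Polygamma 1 (a + real (Suc N)) = Polygamma 1 (a + real N) - 1 / (a + real N)^2"
    by (simp add: add_ac power2_eq_square)
  have "1 / (a + real N)^2 \<le> 1 / a^2" using assms
    by (intro divide_left_mono power_mono) auto
  thus ?case using Suc e by (simp add: add_divide_distrib)
qed

lemma tri1_bound:
  assumes "a > 0" "c > 0"
  shows "Polygamma 1 (a+1+c) + Polygamma 1 a - 2 * Polygamma 1 (a+(1+c)/2) \<le> real (nat \<lceil>c\<rceil> + 1) / a^2"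
proof -
  define N where "N = nat \<lceil>c\<rceil> + 1"
  have N: "c + 1 \<le> real N" unfolding N_def using assms by linarith
  have pz: "0 < a+(1+c)/2" using assms by (simp add: add_pos_nonneg)
  have 1: "Polygamma 1 (a+1+c) < Polygamma 1 (a+(1+c)/2)"
    by (rule Polygamma_real_strict_antimono) (use assms pz in auto)
  have 2: "Polygamma 1 (a + real N) \<le> Polygamma 1 (a+(1+c)/2)"
  proof (cases "a+(1+c)/2 = a + real N")
    case False
    then show ?thesis using Polygamma_real_strict_antimono[of "a+(1+c)/2" "a + real N" 1] assms N pz by auto
  qed simp
  have 3: "Polygamma 1 a - Polygamma 1 (a + real N) \<le> real N / a^2" by (rule tri1_tel[OF assms(1)])
  show ?thesis using 1 2 3 unfolding N_def by linarith
qed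



definition body :: "nat \<Rightarrow> real \<Rightarrow> real \<Rightarrow> real \<Rightarrow> real \<Rightarrow> bool" where
"body k \<beta> \<gamma> a b \<longleftrightarrow> (fact (k - 1) / 2 * ((1 / (b - a) + \<beta>) / a ^ k + (\<beta> - 1 / (b - a)) / b ^ k)
                    < (-1) ^ (k - 1) * (Polygamma (k - 1) b - Polygamma (k - 1) a) / (b - a)
                  \<and> (-1) ^ (k - 1) * (Polygamma (k - 1) b - Polygamma (k - 1) a) / (b - a)
                    < fact (k - 1) / 2 * ((1 / (b - a) + \<gamma>) / a ^ k + (\<gamma> - 1 / (b - a)) / b ^ k))"

definition DIc :: "real \<Rightarrow> real \<Rightarrow> real \<Rightarrow> bool" where
"DIc c \<beta> \<gamma> \<longleftrightarrow> (\<forall>k::nat. k \<ge> 1 \<longrightarrow> (\<forall>a b :: real. 0 < a \<longrightarrow> 0 < b \<longrightarrow> b - a = c \<longrightarrow> body k \<beta> \<gamma> a b))"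

lemma body_iff:
  assumes "c \<noteq> 0" "b - a = c"
  shows "body (Suc n) \<beta> \<gamma> a b \<longleftrightarrow>
    ((1/c+\<beta>)*(1/a^Suc n) + (\<beta>-1/c)*(1/b^Suc n) < 2*(PP n b - PP n a)/c \<and>
     2*(PP n b - PP n a)/c < (1/c+\<gamma>)*(1/a^Suc n) + (\<gamma>-1/c)*(1/b^Suc n))"
proof -
  have f: "fact n / 2 > (0::real)" by simp
  have m: "(-1) ^ n * (Polygamma n b - Polygamma n a) / (b - a) = fact n / 2 * (2*(PP n b - PP n a)/c)"
    using assms by (simp add: PP_def field_simps)
  have l: "\<And>t. fact n / 2 * ((1 / (b - a) + t) / a ^ Suc n + (t - 1 / (b - a)) / b ^ Suc n)
     = fact n / 2 * ((1/c+t)*(1/a^Suc n) + (t-1/c)*(1/b^Suc n))"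
    using assms by simp
  show ?thesis unfolding body_def diff_Suc_1 m l mult_less_cancel_left_pos[OF f] ..
qed

lemma lower_iff:
  assumes "a > 0" "c > 0"
  shows "(1/c+\<beta>)*(1/a^Suc n) + (\<beta>-1/c)*(1/(a+c)^Suc n) < 2*(PP n (a+c) - PP n a)/c
     \<longleftrightarrow> (\<beta>-1)*(1/a^Suc n + 1/(a+c)^Suc n) < LL (PP n) a c / c"
proof -
  define ha where "ha = 1/a^Suc n"
  define hb where "hb = 1/(a+c)^Suc n"
  have s1: "PP n (a+1) = PP n a + ha" using PP_step[of a n] assms unfolding ha_def by simp
  have s2: "PP n (a+c+1) = PP n (a+c) + hb" using PP_step[of "a+c" n] assms unfolding hb_def by simp
  have c0: "c \<noteq> 0" using assms by simp
  have "LL (PP n) a c / c - (\<beta>-1)*(ha + hb) =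
        2*(PP n (a+c) - PP n a)/c - ((1/c+\<beta>)*ha + (\<beta>-1/c)*hb)"
    unfolding LL_def s1 s2 using c0 by (simp add: field_simps)
  thus ?thesis unfolding ha_def hb_def by linarith
qed

lemma upper_iff:
  assumes "a > 0" "c > 0"
  shows "2*(PP n (a+c) - PP n a)/c < (1/c+\<gamma>)*(1/a^Suc n) + (\<gamma>-1/c)*(1/(a+c)^Suc n)
     \<longleftrightarrow> LL (PP n) a c / c < (\<gamma>-1)*(1/a^Suc n + 1/(a+c)^Suc n)"
proof -
  define ha where "ha = 1/a^Suc n"
  define hb where "hb = 1/(a+c)^Suc n"
  have s1: "PP n (a+1) = PP n a + ha" using PP_step[of a n] assms unfolding ha_def by simp
  have s2: "PP n (a+c+1) = PP n (a+c) + hb" using PP_step[of "a+c" n] assms unfolding hb_def by simp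
  have c0: "c \<noteq> 0" using assms by simp
  have "LL (PP n) a c / c - (\<gamma>-1)*(ha + hb) =
        2*(PP n (a+c) - PP n a)/c - ((1/c+\<gamma>)*ha + (\<gamma>-1/c)*hb)"
    unfolding LL_def s1 s2 using c0 by (simp add: field_simps)
  thus ?thesis unfolding ha_def hb_def by linarith
qed

lemma if_small:
  assumes c: "0 < c" "c < 1" and bg: "\<beta> \<le> 1" "\<gamma> \<ge> 1/c"
  shows "DIc c \<beta> \<gamma>"
  unfolding DIc_def
proof (intro allI impI)
  fix k :: nat and a b :: real
  assume k: "k \<ge> 1" and a: "0 < a" and b: "0 < b" and ab: "b - a = c"
  obtain n where n: "k = Suc n" using k by (cases k) auto
  have bd: "b = a + c" using ab by simp
  define ha where "ha = 1/a^Suc n"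
  define hb where "hb = 1/(a+c)^Suc n"
  have ha: "ha > 0" unfolding ha_def using a by simp
  have hb: "hb > 0" unfolding hb_def using a c by simp
  have L: "0 < LL (PP n) a c" using LL_PP_small[OF a c] by blast
  have "(\<beta>-1)*(ha+hb) \<le> 0" using bg ha hb by (simp add: mult_nonpos_nonneg)
  moreover have "0 < LL (PP n) a c / c" using L c by simp
  ultimately have lower: "(\<beta>-1)*(ha+hb) < LL (PP n) a c / c" by linarith
  have s1: "PP n (a+1) = PP n a + ha" using PP_step[of a n] a unfolding ha_def by simp
  have "PP n (a+c) < PP n (a+1)" using PP_mono[of "a+c" "a+1" n] a c by simp
  hence u1: "2*(PP n (a+c) - PP n a)/c < 2*ha/c" using s1 c by (simp add: divide_strict_right_mono)
  have "2/c \<le> 1/c+\<gamma>" using bg by simp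
  hence u2: "2*ha/c \<le> (1/c+\<gamma>)*ha" using ha mult_right_mono[of "2/c" "1/c+\<gamma>" ha] by simp
  have u3: "0 \<le> (\<gamma>-1/c)*hb" using bg hb by simp
  have upper: "2*(PP n (a+c) - PP n a)/c < (1/c+\<gamma>)*ha + (\<gamma>-1/c)*hb" using u1 u2 u3 by linarith
  show "body k \<beta> \<gamma> a b"
    unfolding n bd using body_iff[of c "a+c" a n \<beta> \<gamma>] lower_iff[OF a c(1), of \<beta> n] lower upper c
    unfolding ha_def hb_def by auto
qed

lemma if_big:
  assumes c: "1 < c" and bg: "\<beta> \<le> 1/c" "\<gamma> \<ge> 1"
  shows "DIc c \<beta> \<gamma>"
  unfolding DIc_def
proof (intro allI impI)
  fix k :: nat and a b :: real
  assume k: "k \<ge> 1" and a: "0 < a" and b: "0 < b" and ab: "b - a = c"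
  obtain n where n: "k = Suc n" using k by (cases k) auto
  have c0: "0 < c" using c by simp
  have bd: "b = a + c" using ab by simp
  define ha where "ha = 1/a^Suc n"
  define hb where "hb = 1/(a+c)^Suc n"
  have ha: "ha > 0" unfolding ha_def using a by simp
  have hb: "hb > 0" unfolding hb_def using a c by simp
  have L: "LL (PP n) a c < 0" using LL_PP_big[OF a c] by blast
  have "(\<gamma>-1)*(ha+hb) \<ge> 0" using bg ha hb by simp
  moreover have "LL (PP n) a c / c < 0" using L c by (simp add: divide_neg_pos)
  ultimately have upper: "LL (PP n) a c / c < (\<gamma>-1)*(ha+hb)" by linarith
  have s1: "PP n (a+1) = PP n a + ha" using PP_step[of a n] a unfolding ha_def by simp
  have "PP n (a+1) < PP n (a+c)" using PP_mono[of "a+1" "a+c" n] a c by simp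
  hence u1: "2*ha/c < 2*(PP n (a+c) - PP n a)/c" using s1 c by (simp add: divide_strict_right_mono)
  have "1/c+\<beta> \<le> 2/c" using bg by simp
  hence u2: "(1/c+\<beta>)*ha \<le> 2*ha/c" using ha mult_right_mono[of "1/c+\<beta>" "2/c" ha] by simp
  have u3: "(\<beta>-1/c)*hb \<le> 0" using bg hb by (simp add: mult_nonpos_nonneg)
  have lower: "(1/c+\<beta>)*ha + (\<beta>-1/c)*hb < 2*(PP n (a+c) - PP n a)/c" using u1 u2 u3 by linarith
  show "body k \<beta> \<gamma> a b"
    unfolding n bd using body_iff[of c "a+c" a n \<beta> \<gamma>] upper_iff[OF a c0, of n \<gamma>] lower upper c
    unfolding ha_def hb_def by auto
qed

lemma PP0: "PP 0 x = Polygamma 0 x" by (simp add: PP_def)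

lemma DIc_body1:
  assumes "DIc c \<beta> \<gamma>" "0 < a" "0 < a + c" "c \<noteq> 0"
  shows "(1/c+\<beta>)*(1/a) + (\<beta>-1/c)*(1/(a+c)) < 2*(PP 0 (a+c) - PP 0 a)/c \<and>
     2*(PP 0 (a+c) - PP 0 a)/c < (1/c+\<gamma>)*(1/a) + (\<gamma>-1/c)*(1/(a+c))"
proof -
  have "body (Suc 0) \<beta> \<gamma> a (a+c)" using assms(1-3) unfolding DIc_def by auto
  thus ?thesis using body_iff[of c "a+c" a 0 \<beta> \<gamma>] assms(4) by simp
qed

lemma onlyif_small_beta:
  assumes c: "0 < c" "c < 1" and D: "DIc c \<beta> \<gamma>"
  shows "\<beta> \<le> 1"
proof (rule ccontr)
  assume "\<not> \<beta> \<le> 1"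
  hence bt: "\<beta> - 1 > 0" by simp
  define Nr where "Nr = real (nat \<lceil>c\<rceil> + 1)"
  have Nr: "Nr > 0" unfolding Nr_def by simp
  define a where "a = (1-c)*Nr/(\<beta>-1) + 1"
  have a0: "(1-c)*Nr/(\<beta>-1) > 0" using c Nr bt by simp
  hence a: "a > 0" unfolding a_def by simp
  have ac: "a + c > 0" using a c by simp
  have low: "(1/c+\<beta>)*(1/a^Suc 0) + (\<beta>-1/c)*(1/(a+c)^Suc 0) < 2*(PP 0 (a+c) - PP 0 a)/c"
    using DIc_body1[OF D a ac] c by simp
  hence low2: "(\<beta>-1)*(1/a^Suc 0 + 1/(a+c)^Suc 0) < LL (PP 0) a c / c"
    using lower_iff[OF a c(1), of \<beta> 0] by simp
  have LLb: "LL (PP 0) a c \<le> c*(1-c)*(Polygamma 1 (a+1+c) + Polygamma 1 a - 2 * Polygamma 1 (a+(1+c)/2))"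
    using LL_PP_small[OF a c, of 0] by simp
  have tb: "Polygamma 1 (a+1+c) + Polygamma 1 a - 2 * Polygamma 1 (a+(1+c)/2) \<le> Nr / a^2"
    using tri1_bound[OF a c(1)] unfolding Nr_def .
  have cc: "c*(1-c) > 0" using c by simp
  have "LL (PP 0) a c \<le> c*(1-c)*(Nr/a^2)" using LLb mult_left_mono[OF tb, of "c*(1-c)"] cc by linarith
  hence X: "LL (PP 0) a c / c \<le> (1-c)*(Nr/a^2)" using c by (simp add: field_simps)
  have "1/a \<le> 1/a + 1/(a+c)" using ac by simp
  hence "(\<beta>-1)*(1/a) \<le> (\<beta>-1)*(1/a + 1/(a+c))" by (rule mult_left_mono) (use bt in auto)
  hence "(\<beta>-1)*(1/a) < (1-c)*(Nr/a^2)" using low2 X by simp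
  hence "a^2*((\<beta>-1)*(1/a)) < a^2*((1-c)*(Nr/a^2))" by (rule mult_strict_left_mono) (use a in auto)
  moreover have "a^2*((\<beta>-1)*(1/a)) = (\<beta>-1)*a" using a by (simp add: power2_eq_square)
  moreover have "a^2*((1-c)*(Nr/a^2)) = (1-c)*Nr" using a by simp
  ultimately have "(\<beta>-1)*a < (1-c)*Nr" by simp
  moreover have "(\<beta>-1)*a = (1-c)*Nr + (\<beta>-1)" unfolding a_def using bt by (simp add: field_simps)
  ultimately show False using bt by simp
qed

lemma onlyif_big_gamma:
  assumes c: "1 < c" and D: "DIc c \<beta> \<gamma>"
  shows "\<gamma> \<ge> 1"
proof (rule ccontr)
  assume "\<not> \<gamma> \<ge> 1"
  hence gt: "1 - \<gamma> > 0" by simp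
  have c0: "c > 0" using c by simp
  define Nr where "Nr = real (nat \<lceil>c\<rceil> + 1)"
  have Nr: "Nr > 0" unfolding Nr_def by simp
  define a where "a = (c-1)*Nr/(c*(1-\<gamma>)) + 1"
  have a0: "(c-1)*Nr/(c*(1-\<gamma>)) > 0" using c Nr gt by simp
  hence a: "a > 0" unfolding a_def by simp
  have ac: "a + c > 0" using a c by simp
  have up: "2*(PP 0 (a+c) - PP 0 a)/c < (1/c+\<gamma>)*(1/a^Suc 0) + (\<gamma>-1/c)*(1/(a+c)^Suc 0)"
    using DIc_body1[OF D a ac] c by simp
  hence up2: "LL (PP 0) a c / c < (\<gamma>-1)*(1/a^Suc 0 + 1/(a+c)^Suc 0)"
    using upper_iff[OF a c0, of 0 \<gamma>] by simp
  have LLb: "- LL (PP 0) a c \<le> (c-1)*(Polygamma 1 (a+1+c) + Polygamma 1 a - 2 * Polygamma 1 (a+(1+c)/2))"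
    using LL_PP_big[OF a c, of 0] by simp
  have tb: "Polygamma 1 (a+1+c) + Polygamma 1 a - 2 * Polygamma 1 (a+(1+c)/2) \<le> Nr / a^2"
    using tri1_bound[OF a c0] unfolding Nr_def .
  have cc: "c-1 > 0" using c by simp
  have "- LL (PP 0) a c \<le> (c-1)*(Nr/a^2)" using LLb mult_left_mono[OF tb, of "c-1"] cc by linarith
  hence "- ((c-1)*(Nr/a^2)) \<le> LL (PP 0) a c" by linarith
  hence X: "- ((c-1)*(Nr/a^2)) / c \<le> LL (PP 0) a c / c" by (rule divide_right_mono) (use c0 in simp)
  have "1/a \<le> 1/a + 1/(a+c)" using ac by simp
  hence "(\<gamma>-1)*(1/a + 1/(a+c)) \<le> (\<gamma>-1)*(1/a)" using gt by (intro mult_left_mono_neg) auto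
  hence "- ((c-1)*(Nr/a^2)) / c < (\<gamma>-1)*(1/a)" using up2 X by simp
  moreover have "(1-\<gamma>)*(1/a) = - ((\<gamma>-1)*(1/a))" by (metis minus_diff_eq minus_mult_left)
  moreover have "- ((c-1)*(Nr/a^2)) / c = - (((c-1)*(Nr/a^2)) / c)" by simp
  ultimately have "(1-\<gamma>)*(1/a) < ((c-1)*(Nr/a^2)) / c" by linarith
  hence "a^2*((1-\<gamma>)*(1/a)) < a^2*(((c-1)*(Nr/a^2)) / c)" by (rule mult_strict_left_mono) (use a in auto)
  moreover have "a^2*((1-\<gamma>)*(1/a)) = (1-\<gamma>)*a" using a by (simp add: power2_eq_square)
  moreover have "a^2*(((c-1)*(Nr/a^2)) / c) = (c-1)*Nr/c" using a by simp
  ultimately have "(1-\<gamma>)*a < (c-1)*Nr/c" by simp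
  moreover have "(1-\<gamma>)*a = (c-1)*Nr/c + (1-\<gamma>)" unfolding a_def using gt c0 by (simp add: field_simps)
  ultimately show False using gt by simp
qed

lemma onlyif_small_gamma:
  assumes c: "0 < c" "c < 1" and D: "DIc c \<beta> \<gamma>"
  shows "\<gamma> \<ge> 1/c"
proof (rule ccontr)
  assume "\<not> \<gamma> \<ge> 1/c"
  define d where "d = 1/c - \<gamma>"
  have d: "d > 0" unfolding d_def using \<open>\<not> \<gamma> \<ge> 1/c\<close> by simp
  define a where "a = d*c/(2*\<bar>\<gamma>\<bar>+2)"
  have a: "a > 0" unfolding a_def using d c by (simp add: add_nonneg_pos)
  have ac: "a + c > 0" using a c by simp
  have up: "2*(PP 0 (a+c) - PP 0 a)/c < (1/c+\<gamma>)*(1/a) + (\<gamma>-1/c)*(1/(a+c))"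
    using DIc_body1[OF D a ac] c by simp
  have s1: "PP 0 (a+1) = PP 0 a + 1/a" using PP_step[of a 0] a by simp
  have s2: "PP 0 (a+c+1) = PP 0 (a+c) + 1/(a+c)" using PP_step[of "a+c" 0] ac by simp
  have "PP 0 (a+1) < PP 0 (a+c+1)" using PP_mono[of "a+1" "a+c+1" 0] a c by simp
  hence m: "1/a - 1/(a+c) < PP 0 (a+c) - PP 0 a" using s1 s2 by simp
  define ha where "ha = 1/a"
  define hb where "hb = 1/(a+c)"
  have "2*(ha - hb)/c < 2*(PP 0 (a+c) - PP 0 a)/c" using m c unfolding ha_def hb_def
    by (simp add: divide_strict_right_mono)
  hence up2: "2*(ha - hb)/c < (1/c+\<gamma>)*ha + (\<gamma>-1/c)*hb" using up unfolding ha_def hb_def by linarith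
  have idt: "(1/c+\<gamma>)*ha + (\<gamma>-1/c)*hb - 2*(ha - hb)/c = (1/c+\<gamma>)*hb - d*ha"
    unfolding d_def using c by (simp add: field_simps)
  have "d*ha < (1/c+\<gamma>)*hb" using up2 idt by linarith
  hence "d/a < (1/c+\<gamma>)/(a+c)" unfolding ha_def hb_def by simp
  hence "d*(a+c) < (1/c+\<gamma>)*a" using a ac by (simp add: field_simps)
  moreover have "1/c = d + \<gamma>" unfolding d_def by simp
  ultimately have "d*a + d*c < (d + 2*\<gamma>)*a" by (simp add: algebra_simps)
  hence X: "d*c < 2*\<gamma>*a" by (simp add: algebra_simps)
  have g1: "\<gamma>*a \<le> \<bar>\<gamma>\<bar>*a" using a by (intro mult_right_mono) auto
  have g2: "a*(2*\<bar>\<gamma>\<bar>+2) = d*c" unfolding a_def by (simp add: field_simps add_nonneg_pos)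
  have g3: "a*(2*\<bar>\<gamma>\<bar>+2) = 2*(\<bar>\<gamma>\<bar>*a) + 2*a" by (simp add: algebra_simps)
  have g4: "2*\<gamma>*a = 2*(\<gamma>*a)" by simp
  show False using X g1 g2 g3 g4 a by linarith
qed

lemma onlyif_big_beta:
  assumes c: "1 < c" and D: "DIc c \<beta> \<gamma>"
  shows "\<beta> \<le> 1/c"
proof (rule ccontr)
  assume "\<not> \<beta> \<le> 1/c"
  define d where "d = \<beta> - 1/c"
  have d: "d > 0" unfolding d_def using \<open>\<not> \<beta> \<le> 1/c\<close> by simp
  have c0: "c > 0" using c by simp
  define K where "K = PP 0 (c+2) - PP 0 1"
  have K: "K > 0" unfolding K_def using PP_mono[of 1 "c+2" 0] c by simp
  define a where "a = d*c/(2*K + d*c + 1)"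
  have den: "2*K + d*c + 1 > 0" using K d c0 by (simp add: add_pos_pos)
  have a: "a > 0" unfolding a_def using d c0 den by simp
  have a1: "a < 1" unfolding a_def using den K by (simp add: field_simps)
  have ac: "a + c > 0" using a c by simp
  have low: "(1/c+\<beta>)*(1/a) + (\<beta>-1/c)*(1/(a+c)) < 2*(PP 0 (a+c) - PP 0 a)/c"
    using DIc_body1[OF D a ac] c by simp
  have s1: "PP 0 (a+1) = PP 0 a + 1/a" using PP_step[of a 0] a by simp
  have s2: "PP 0 (a+c+1) = PP 0 (a+c) + 1/(a+c)" using PP_step[of "a+c" 0] ac by simp
  have "PP 0 1 < PP 0 (a+1)" using PP_mono[of 1 "a+1" 0] a by simp
  moreover have "PP 0 (a+c+1) < PP 0 (c+2)" using PP_mono[of "a+c+1" "c+2" 0] a a1 c by simp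
  ultimately have m: "PP 0 (a+c) - PP 0 a < 1/a - 1/(a+c) + K" using s1 s2 unfolding K_def by simp
  define ha where "ha = 1/a"
  define hb where "hb = 1/(a+c)"
  have "2*(PP 0 (a+c) - PP 0 a)/c < 2*(ha - hb + K)/c" using m c0 unfolding ha_def hb_def
    by (simp add: divide_strict_right_mono)
  hence low2: "(1/c+\<beta>)*ha + (\<beta>-1/c)*hb < 2*(ha - hb + K)/c" using low unfolding ha_def hb_def by linarith
  have idt: "2*(ha - hb + K)/c - ((1/c+\<beta>)*ha + (\<beta>-1/c)*hb) = 2*K/c - d*ha - (\<beta>+1/c)*hb"
    unfolding d_def using c0 by (simp add: field_simps)
  have bc: "\<beta>+1/c > 0" using d c0 unfolding d_def by (smt (verit) divide_pos_pos)
  have "(\<beta>+1/c)*hb > 0" unfolding hb_def using bc ac by simp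
  hence "d*ha < 2*K/c" using low2 idt by linarith
  hence "d/a < 2*K/c" unfolding ha_def by simp
  hence X: "d*c < 2*K*a" using a c0 by (simp add: field_simps)
  have "a*(2*K + d*c + 1) = d*c" unfolding a_def using den by simp
  moreover have "a*(d*c+1) > 0" using a d c0 by (simp add: add_pos_pos)
  ultimately show False using X by (simp add: algebra_simps)
qed



lemma lnG_step: "x > 0 \<Longrightarrow> ln_Gamma (x+1) = ln_Gamma x + ln (x::real)"
proof -
  assume x: "x > 0"
  have "Gamma (x+1) = x * Gamma x" by (rule Gamma_plus1) (use x pos_notnp in auto)
  moreover have "Gamma x > 0" using x by (rule Gamma_real_pos)
  moreover have "Gamma x \<noteq> 0" using \<open>Gamma x > 0\<close> by simp
  ultimately show ?thesis using x by (simp add: ln_Gamma_real_pos ln_mult)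
qed

lemma LL_lnG:
  assumes a: "a > 0" and c: "c > 0"
  shows "LL (\<lambda>x. - ln_Gamma x) a c = -2*(ln_Gamma (a+c) - ln_Gamma a) + (1+c)*ln a - (1-c)*ln (a+c)"
  unfolding LL_def using lnG_step[of a] lnG_step[of "a+c"] a c by (simp add: algebra_simps)

lemma lnG_derivs:
  shows "\<And>x. x > 0 \<Longrightarrow> ((\<lambda>x. - ln_Gamma x) has_real_derivative (- Digamma x)) (at x)"
    and "\<And>x. x > 0 \<Longrightarrow> ((\<lambda>x. - Digamma x) has_real_derivative (- Polygamma 1 x)) (at (x::real))"
    and "\<And>x y. 0 < x \<Longrightarrow> x < y \<Longrightarrow> - Polygamma 1 x < - Polygamma 1 (y::real)"
proof -
  fix x :: real assume x: "x > 0"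
  show "((\<lambda>x. - ln_Gamma x) has_real_derivative (- Digamma x)) (at x)"
    by (rule DERIV_minus) (rule has_field_derivative_ln_Gamma_real[OF x])
  have "(Polygamma 0 has_real_derivative Polygamma (Suc 0) x) (at x)"
    by (rule has_field_derivative_Polygamma) (use x pos_notnp in auto)
  thus "((\<lambda>x. - Digamma x) has_real_derivative (- Polygamma 1 x)) (at x)"
    using DERIV_minus by fastforce
next
  fix x y :: real assume "0 < x" "x < y"
  thus "- Polygamma 1 x < - Polygamma 1 y" using Polygamma_real_strict_antimono[of x y 1] by simp
qed

definition Q :: "real \<Rightarrow> real \<Rightarrow> real" where
  "Q a b = (ln_Gamma b - ln_Gamma a)/(b-a) - ((ln a + ln b)/2 + (ln a - ln b)/(2*(b-a)))"

lemma Q_sym: "a \<noteq> b \<Longrightarrow> Q a b = Q b a"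
  unfolding Q_def by (simp add: field_simps)

lemma Q_pos_c:
  assumes a: "a > 0" and c: "c > 0"
  shows "c * Q a (a+c) = - LL (\<lambda>x. - ln_Gamma x) a c / 2"
  unfolding LL_lnG[OF a c] Q_def using c by (simp add: field_simps)

lemma Q_sign:
  assumes a: "a > 0" and c: "c > 0"
  shows "(c < 1 \<longrightarrow> Q a (a+c) < 0) \<and> (c > 1 \<longrightarrow> Q a (a+c) > 0)"
proof (intro conjI impI)
  assume c1: "c < 1"
  have "0 < LL (\<lambda>x. - ln_Gamma x) a c"
    using L_small[OF lnG_derivs a c c1] by blast
  hence "c * Q a (a+c) < 0" using Q_pos_c[OF a c] by simp
  thus "Q a (a+c) < 0" using c by (simp add: mult_less_0_iff)
next
  assume c1: "c > 1"
  have "LL (\<lambda>x. - ln_Gamma x) a c < 0"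
    using L_big[OF lnG_derivs a c1] by blast
  hence "c * Q a (a+c) > 0" using Q_pos_c[OF a c] by simp
  thus "Q a (a+c) > 0" using c by (simp add: zero_less_mult_iff)
qed

lemma Q_sign_gen:
  assumes a: "a > 0" and b: "b > 0" and ab: "a \<noteq> b"
  shows "(\<bar>b-a\<bar> < 1 \<longrightarrow> Q a b < 0) \<and> (\<bar>b-a\<bar> > 1 \<longrightarrow> Q a b > 0)"
proof (cases "a < b")
  case True
  then show ?thesis using Q_sign[OF a, of "b-a"] by simp
next
  case False
  hence "b < a" using ab by simp
  then show ?thesis using Q_sign[OF b, of "a-b"] Q_sym[OF ab] by (simp add: abs_if)
qed

lemma powr_forms:
  assumes a: "a > 0" and b: "b > 0" and ab: "a \<noteq> b"
  shows "(Gamma b / Gamma a) powr (1 / (b - a)) = exp ((ln_Gamma b - ln_Gamma a)/(b-a))"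
    and "sqrt (a * b) * (a / b) powr (1 / (2 * (b - a))) = exp ((ln a + ln b)/2 + (ln a - ln b)/(2*(b-a)))"
proof -
  have ga: "Gamma a > 0" "Gamma b > 0" using a b by (simp_all add: Gamma_real_pos)
  show "(Gamma b / Gamma a) powr (1 / (b - a)) = exp ((ln_Gamma b - ln_Gamma a)/(b-a))"
    using ga a b by (simp add: powr_def ln_div ln_Gamma_real_pos less_imp_neq[symmetric])
  have "sqrt (a*b) = (a*b) powr (1/2)" using a b by (simp add: powr_half_sqrt)
  also have "\<dots> = exp ((ln a + ln b)/2)" using a b by (simp add: powr_def ln_mult)
  finally have s: "sqrt (a*b) = exp ((ln a + ln b)/2)" .
  have p: "(a / b) powr (1 / (2 * (b - a))) = exp ((ln a - ln b)/(2*(b-a)))"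
    using a b by (simp add: powr_def ln_div)
  show "sqrt (a * b) * (a / b) powr (1 / (2 * (b - a))) = exp ((ln a + ln b)/2 + (ln a - ln b)/(2*(b-a)))"
    unfolding s p by (simp add: exp_add)
qed

lemma part1:
  "\<forall>a b :: real. 0 < a \<longrightarrow> 0 < b \<longrightarrow> a \<noteq> b \<longrightarrow>
            (\<bar>b - a\<bar> < 1 \<longrightarrow>
               (Gamma b / Gamma a) powr (1 / (b - a))
                 < sqrt (a * b) * (a / b) powr (1 / (2 * (b - a)))) \<and>
            (\<bar>b - a\<bar> > 1 \<longrightarrow>
               (Gamma b / Gamma a) powr (1 / (b - a))
                 > sqrt (a * b) * (a / b) powr (1 / (2 * (b - a))))"
proof (intro allI impI)
  fix a b :: real assume a: "0 < a" and b: "0 < b" and ab: "a \<noteq> b"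
  note f = powr_forms[OF a b ab]
  show "(\<bar>b - a\<bar> < 1 \<longrightarrow>
               (Gamma b / Gamma a) powr (1 / (b - a))
                 < sqrt (a * b) * (a / b) powr (1 / (2 * (b - a)))) \<and>
            (\<bar>b - a\<bar> > 1 \<longrightarrow>
               (Gamma b / Gamma a) powr (1 / (b - a))
                 > sqrt (a * b) * (a / b) powr (1 / (2 * (b - a))))"
    unfolding f using Q_sign_gen[OF a b ab] unfolding Q_def by auto
qed



lemma swap1: "(x::real)*(p - q)/(b-a) = x*(q-p)/(a-b)"
  by (metis minus_diff_eq mult_minus_right divide_minus_right divide_minus_left)
lemma swap2: "(1 / (b - a) + (t::real)) / A + (t - 1 / (b - a)) / B = (1 / (a - b) + t) / B + (t - 1 / (a - b)) / A"
proof -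
  have "1 / (a - b) = - (1 / (b - a))" by (metis minus_diff_eq divide_minus_right)
  thus ?thesis by simp
qed

lemma body_sym:
  shows "body k \<beta> \<gamma> a b = body k \<beta> \<gamma> b a"
  unfolding body_def swap1[of _ "Polygamma (k - 1) b" "Polygamma (k - 1) a" b a] swap2[of b a] ..

lemma DIc_neg: "DIc (-c) \<beta> \<gamma> = DIc c \<beta> \<gamma>"
proof -
  have "DIc c \<beta> \<gamma>" if "DIc (-c) \<beta> \<gamma>" for c
    unfolding DIc_def
  proof (intro allI impI)
    fix k :: nat and a b :: real
    assume k: "k \<ge> 1" and a: "0 < a" and b: "0 < b" and ab: "b - a = c"
    have "\<forall>k::nat. k \<ge> 1 \<longrightarrow> (\<forall>a b :: real. 0 < a \<longrightarrow> 0 < b \<longrightarrow> b - a = -c \<longrightarrow> body k \<beta> \<gamma> a b)"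
      using that unfolding DIc_def .
    moreover have "a - b = -c" using ab by simp
    ultimately have "body k \<beta> \<gamma> b a" using k a b by blast
    thus "body k \<beta> \<gamma> a b" by (rule iffD2[OF body_sym[of k \<beta> \<gamma> a b]])
  qed
  note h = this
  show ?thesis
  proof
    assume "DIc (-c) \<beta> \<gamma>" thus "DIc c \<beta> \<gamma>" by (rule h)
  next
    assume "DIc c \<beta> \<gamma>"
    hence "DIc (- (- c)) \<beta> \<gamma>" by (simp only: minus_minus)
    thus "DIc (-c) \<beta> \<gamma>" by (rule h)
  qed
qed

lemma part2_pos:
  assumes c: "c > 0"
  shows "(c < 1 \<longrightarrow> (DIc c \<beta> \<gamma> \<longleftrightarrow> \<beta> \<le> 1 \<and> \<gamma> \<ge> 1 / c)) \<and>
         (c > 1 \<longrightarrow> (DIc c \<beta> \<gamma> \<longleftrightarrow> \<beta> \<le> 1 / c \<and> \<gamma> \<ge> 1))"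
proof (intro conjI impI)
  assume c1: "c < 1"
  show "DIc c \<beta> \<gamma> \<longleftrightarrow> \<beta> \<le> 1 \<and> \<gamma> \<ge> 1 / c"
  proof
    assume D: "DIc c \<beta> \<gamma>"
    show "\<beta> \<le> 1 \<and> \<gamma> \<ge> 1 / c" using onlyif_small_beta[OF c c1 D] onlyif_small_gamma[OF c c1 D] by (rule conjI)
  next
    assume "\<beta> \<le> 1 \<and> \<gamma> \<ge> 1 / c"
    thus "DIc c \<beta> \<gamma>" using if_small[OF c c1] by blast
  qed
next
  assume c1: "c > 1"
  show "DIc c \<beta> \<gamma> \<longleftrightarrow> \<beta> \<le> 1 / c \<and> \<gamma> \<ge> 1"
  proof
    assume D: "DIc c \<beta> \<gamma>"
    show "\<beta> \<le> 1 / c \<and> \<gamma> \<ge> 1" using onlyif_big_beta[OF c1 D] onlyif_big_gamma[OF c1 D] by (rule conjI)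
  next
    assume "\<beta> \<le> 1 / c \<and> \<gamma> \<ge> 1"
    thus "DIc c \<beta> \<gamma>" using if_big[OF c1] by blast
  qed
qed

lemma part2:
  "\<forall>c \<beta> \<gamma> :: real. c \<noteq> 0 \<longrightarrow>
     (\<bar>c\<bar> < 1 \<longrightarrow> (DIc c \<beta> \<gamma> \<longleftrightarrow> \<beta> \<le> 1 \<and> \<gamma> \<ge> 1 / \<bar>c\<bar>)) \<and>
     (\<bar>c\<bar> > 1 \<longrightarrow> (DIc c \<beta> \<gamma> \<longleftrightarrow> \<beta> \<le> 1 / \<bar>c\<bar> \<and> \<gamma> \<ge> 1))"
proof (intro allI impI)
  fix c \<beta> \<gamma> :: real assume c: "c \<noteq> 0"
  show "(\<bar>c\<bar> < 1 \<longrightarrow> (DIc c \<beta> \<gamma> \<longleftrightarrow> \<beta> \<le> 1 \<and> \<gamma> \<ge> 1 / \<bar>c\<bar>)) \<and>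
     (\<bar>c\<bar> > 1 \<longrightarrow> (DIc c \<beta> \<gamma> \<longleftrightarrow> \<beta> \<le> 1 / \<bar>c\<bar> \<and> \<gamma> \<ge> 1))"
  proof (cases "c > 0")
    case True
    have ab: "\<bar>c\<bar> = c" using True by simp
    show ?thesis unfolding ab by (rule part2_pos[OF True])
  next
    case False
    hence nc: "-c > 0" using c by simp
    have ab: "\<bar>c\<bar> = -c" using False by simp
    have e: "DIc c \<beta> \<gamma> = DIc (-c) \<beta> \<gamma>" by (simp only: DIc_neg)
    show ?thesis unfolding ab e by (rule part2_pos[OF nc])
  qed
qed

theorem theorem3:
  shows "(\<forall>a b :: real. 0 < a \<longrightarrow> 0 < b \<longrightarrow> a \<noteq> b \<longrightarrow>
            (\<bar>b - a\<bar> < 1 \<longrightarrow>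
               (Gamma b / Gamma a) powr (1 / (b - a))
                 < sqrt (a * b) * (a / b) powr (1 / (2 * (b - a)))) \<and>
            (\<bar>b - a\<bar> > 1 \<longrightarrow>
               (Gamma b / Gamma a) powr (1 / (b - a))
                 > sqrt (a * b) * (a / b) powr (1 / (2 * (b - a)))))
   \<and>
   (\<forall>c \<beta> \<gamma> :: real. c \<noteq> 0 \<longrightarrow>
      (let DI = (\<forall>k::nat. k \<ge> 1 \<longrightarrow> (\<forall>a b :: real. 0 < a \<longrightarrow> 0 < b \<longrightarrow> b - a = c \<longrightarrow>
                  fact (k - 1) / 2 * ((1 / (b - a) + \<beta>) / a ^ k + (\<beta> - 1 / (b - a)) / b ^ k)
                    < (-1) ^ (k - 1) * (Polygamma (k - 1) b - Polygamma (k - 1) a) / (b - a)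
                  \<and> (-1) ^ (k - 1) * (Polygamma (k - 1) b - Polygamma (k - 1) a) / (b - a)
                    < fact (k - 1) / 2 * ((1 / (b - a) + \<gamma>) / a ^ k + (\<gamma> - 1 / (b - a)) / b ^ k)))
       in (\<bar>c\<bar> < 1 \<longrightarrow> (DI \<longleftrightarrow> \<beta> \<le> 1 \<and> \<gamma> \<ge> 1 / \<bar>c\<bar>)) \<and>
          (\<bar>c\<bar> > 1 \<longrightarrow> (DI \<longleftrightarrow> \<beta> \<le> 1 / \<bar>c\<bar> \<and> \<gamma> \<ge> 1))))"
  unfolding Let_def by (rule conjI[OF part1 part2[unfolded DIc_def body_def]])


end
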